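(* Let $X$ be a hyperbolic Riemann surface and let $X_1\subset X_2\subset\cdots$ be open subsets of $X$ with $X=\bigcup_{j=1}^\infty X_j$. Let $f_j:\Delta^*\to X_j$ be holomorphic maps and let $\{z_j\}\subset\Delta^*$ be a sequence with $z_j\to 0$ and $f_j(z_j)\to z_0$ for some $z_0\in X$. Then: \begin{enumerate} \item[(i)] for all $j$ sufficiently large, $f_j$ extends to a holomorphic map $F_j:\Delta\to X_j$; \item[(ii)] there is a subsequence $\{F_{j_k}\}$ of $\{F_j\}$ which converges uniformly on compact subsets of $\Delta$ to a holomorphic map $F:\Delta\to X$. \end{enumerate}
   Context: $\Delta=\{z\in\mathbb{C}:|z|<1\}$ and $\Delta^*=\Delta\setminus\{0\}$. A Riemann surface is a connected one-dimensional complex manifold; it is hyperbolic if its universal covering surface is $\Delta$ (equivalently, it is Kobayashi hyperbolic). Open subsets $X_j$ need not be connected in general, but the maps $f_j$ take values in them. *)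

theory Defs
  imports "HOL-Complex_Analysis.Complex_Analysis"
begin

definition is_chart :: "'a topology \<Rightarrow> 'a set \<times> ('a \<Rightarrow> complex) \<Rightarrow> bool" where
  "is_chart X c \<longleftrightarrow> openin X (fst c) \<and> open (snd c ` fst c) \<and>
     homeomorphic_map (subtopology X (fst c)) (top_of_set (snd c ` fst c)) (snd c)"

definition riemann_surface :: "'a topology \<Rightarrow> ('a set \<times> ('a \<Rightarrow> complex)) set \<Rightarrow> bool" where
  "riemann_surface X A \<longleftrightarrow>
     topspace X \<noteq> {} \<and> connected_space X \<and> Hausdorff_space X \<and>
     (\<forall>c\<in>A. is_chart X c) \<and>
     (\<Union>c\<in>A. fst c) = topspace X \<and>
     (\<forall>c\<in>A. \<forall>d\<in>A. ((snd d) \<circ> inv_into (fst c) (snd c))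
          holomorphic_on (snd c ` (fst c \<inter> fst d)))"

definition holo_map :: "complex set \<Rightarrow> 'a topology \<Rightarrow> ('a set \<times> ('a \<Rightarrow> complex)) set
    \<Rightarrow> (complex \<Rightarrow> 'a) \<Rightarrow> bool" where
  "holo_map S X A f \<longleftrightarrow> continuous_map (top_of_set S) X f \<and>
     (\<forall>d\<in>A. ((snd d) \<circ> f) holomorphic_on (S \<inter> f -` fst d))"

text \<open>Covering map from a set of the plane onto the space X (abstract-topology analogue
  of the library's covering_space).\<close>
definition covering_map_onto :: "complex set \<Rightarrow> (complex \<Rightarrow> 'a) \<Rightarrow> 'a topology \<Rightarrow> bool" where
  "covering_map_onto C p X \<longleftrightarrow>
     continuous_map (top_of_set C) X p \<and> p ` C = topspace X \<and>
     (\<forall>x\<in>topspace X. \<exists>T. x \<in> T \<and> openin X T \<and>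
        (\<exists>v. \<Union>v = C \<inter> p -` T \<and> (\<forall>u\<in>v. openin (top_of_set C) u) \<and>
             pairwise disjnt v \<and>
             (\<forall>u\<in>v. homeomorphic_map (top_of_set u) (subtopology X T) p)))"

text \<open>Hyperbolic: the universal cover is the unit disc, i.e. there is a holomorphic
  covering map from the unit disc onto X (the disc is simply connected).\<close>
definition hyperbolic_rs :: "'a topology \<Rightarrow> ('a set \<times> ('a \<Rightarrow> complex)) set \<Rightarrow> bool" where
  "hyperbolic_rs X A \<longleftrightarrow> riemann_surface X A \<and>
     (\<exists>p. holo_map (ball 0 1) X A p \<and> covering_map_onto (ball 0 1) p X)"

text \<open>Uniform convergence on compact subsets of S (compact-open convergence),
  for maps into a topological space.\<close>
definition conv_on_compacts :: "complex set \<Rightarrow> 'a topology \<Rightarrow> (nat \<Rightarrow> complex \<Rightarrow> 'a)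
    \<Rightarrow> (complex \<Rightarrow> 'a) \<Rightarrow> bool" where
  "conv_on_compacts S X G F \<longleftrightarrow>
     (\<forall>K W. compact K \<and> K \<subseteq> S \<and> openin X W \<and> F ` K \<subseteq> W \<longrightarrow>
        (\<forall>\<^sub>F k in sequentially. G k ` K \<subseteq> W))"

end

theory Submission
  imports Defs
begin
lemma holo_map_compose:
  assumes hp: "holo_map S' X A psi" and hh: "h holomorphic_on S" and sub: "h ` S \<subseteq> S'"
  shows "holo_map S X A (psi \<circ> h)"
proof -
  have c1: "continuous_map (top_of_set S) (top_of_set S') h"
    using hh sub by (auto intro: holomorphic_on_imp_continuous_on)
  have c2: "continuous_map (top_of_set S') X psi" using hp by (simp add: holo_map_def)
  have "continuous_map (top_of_set S) X (psi \<circ> h)"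
    using continuous_map_compose[OF c1 c2] .
  moreover have "((snd d) \<circ> (psi \<circ> h)) holomorphic_on (S \<inter> (psi \<circ> h) -` fst d)" if d: "d \<in> A" for d
  proof -
    have "(snd d \<circ> psi) holomorphic_on (S' \<inter> psi -` fst d)" using hp d by (simp add: holo_map_def)
    moreover have "h holomorphic_on (S \<inter> (psi \<circ> h) -` fst d)" using hh holomorphic_on_subset by blast
    moreover have "h ` (S \<inter> (psi \<circ> h) -` fst d) \<subseteq> S' \<inter> psi -` fst d" using sub by auto
    ultimately have "((snd d \<circ> psi) \<circ> h) holomorphic_on (S \<inter> (psi \<circ> h) -` fst d)"
      using holomorphic_on_compose_gen by blast
    then show ?thesis by (simp add: o_assoc)
  qed
  ultimately show ?thesis by (simp add: holo_map_def)
qed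

lemma pullback_covering:
  fixes p :: "complex \<Rightarrow> 'a" and phi :: "complex \<Rightarrow> 'a"
  assumes cov: "covering_map_onto D p X" and phi: "continuous_map (top_of_set U) X phi"
  shows "covering_space {(w,y). w \<in> U \<and> y \<in> D \<and> p y = phi w} fst U"
proof -
  define E where "E = {(w,y). w \<in> U \<and> y \<in> D \<and> p y = phi w}"
  have pD: "p ` D = topspace X" using cov by (simp add: covering_map_onto_def)
  have phiU: "phi w \<in> topspace X" if "w \<in> U" for w
    using phi that by (auto simp: continuous_map_def)
  have "continuous_on E fst" by (intro continuous_intros)
  moreover have "fst ` E = U"
  proof
    show "fst ` E \<subseteq> U" by (auto simp: E_def)
    show "U \<subseteq> fst ` E"
    proof
      fix w assume w: "w \<in> U"
      then obtain y where "y \<in> D" "p y = phi w" using phiU pD by (metis imageE)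
      then have "(w,y) \<in> E" using w by (simp add: E_def)
      then show "w \<in> fst ` E" by force
    qed
  qed
  moreover have "\<exists>T. w \<in> T \<and> openin (top_of_set U) T \<and>
                    (\<exists>v. \<Union>v = E \<inter> fst -` T \<and>
                        (\<forall>u \<in> v. openin (top_of_set E) u) \<and>
                        pairwise disjnt v \<and>
                        (\<forall>u \<in> v. \<exists>q. homeomorphism u T fst q))" if w: "w \<in> U" for w
  proof -
    obtain T v where xT: "phi w \<in> T" and opT: "openin X T" and Uv: "\<Union>v = D \<inter> p -` T"
      and opv: "\<forall>u\<in>v. openin (top_of_set D) u" and dj: "pairwise disjnt v"
      and hm: "\<forall>u\<in>v. homeomorphic_map (top_of_set u) (subtopology X T) p"
      using cov phiU[OF w] unfolding covering_map_onto_def by metis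
    have TX: "T \<subseteq> topspace X" using opT openin_subset by blast
    define U' where "U' = U \<inter> phi -` T"
    have opU': "openin (top_of_set U) U'"
    proof -
      have "openin (top_of_set U) {x \<in> topspace (top_of_set U). phi x \<in> T}"
        using openin_continuous_map_preimage[OF phi opT] .
      moreover have "{x \<in> topspace (top_of_set U). phi x \<in> T} = U'" by (auto simp: U'_def)
      ultimately show ?thesis by simp
    qed
    obtain OU where OU: "open OU" "U' = U \<inter> OU" using opU' by (metis inf_commute openin_open)
    define P where "P u = {(w',y). w' \<in> U' \<and> y \<in> u \<and> p y = phi w'}" for u
    have "\<Union>(P ` v) = E \<inter> fst -` U'"
    proof
      show "\<Union>(P ` v) \<subseteq> E \<inter> fst -` U'"
        using Uv by (auto simp: P_def E_def U'_def)
      show "E \<inter> fst -` U' \<subseteq> \<Union>(P ` v)"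
      proof
        fix z assume z: "z \<in> E \<inter> fst -` U'"
        obtain w' y where zz: "z = (w',y)" by force
        have "y \<in> \<Union>v" using z Uv by (auto simp: zz E_def U'_def)
        then obtain u where "u \<in> v" "y \<in> u" by blast
        then show "z \<in> \<Union>(P ` v)" using z by (auto simp: zz P_def E_def)
      qed
    qed
    moreover have "openin (top_of_set E) (P u)" if u: "u \<in> v" for u
    proof -
      obtain Ou where Ou: "open Ou" "u = D \<inter> Ou" using opv u by (metis inf_commute openin_open)
      have "P u = E \<inter> (OU \<times> Ou)"
        using Ou OU by (auto simp: P_def E_def U'_def)
      then show ?thesis using Ou OU by (auto simp: openin_open intro!: exI[of _ "OU \<times> Ou"] open_Times)
    qed
    moreover have "pairwise disjnt (P ` v)"
      using dj by (fastforce simp: pairwise_def disjnt_def P_def)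
    moreover have "\<exists>q. homeomorphism (P u) U' fst q" if u: "u \<in> v" for u
    proof -
      obtain q where q: "homeomorphic_maps (top_of_set u) (subtopology X T) p q"
        using hm u homeomorphic_map_maps by blast
      have tsT: "topspace (subtopology X T) = T" using TX by auto
      have cq: "continuous_map (subtopology X T) (top_of_set u) q" and qp: "\<And>y. y \<in> u \<Longrightarrow> q (p y) = y"
        and pq: "\<And>x. x \<in> T \<Longrightarrow> p (q x) = x"
        using q tsT by (auto simp: homeomorphic_maps_def)
      have cp: "continuous_map (top_of_set u) (subtopology X T) p"
        using q by (auto simp: homeomorphic_maps_def)
      have qT: "q x \<in> u" if "x \<in> T" for x
        using cq that tsT by (auto simp: continuous_map_def)
      have cphi: "continuous_map (top_of_set U') (subtopology X T) phi"
      proof -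
        have "continuous_map (top_of_set U') X phi"
          using continuous_map_from_subtopology[OF phi, of U'] by (simp add: subtopology_subtopology U'_def inf_absorb2)
        then show ?thesis by (auto simp: continuous_map_in_subtopology U'_def)
      qed
      have "continuous_map (top_of_set U') (top_of_set u) (q \<circ> phi)"
        using continuous_map_compose[OF cphi cq] .
      then have cqphi: "continuous_on U' (q \<circ> phi)"
        by (simp add: continuous_map_in_subtopology)
      show ?thesis
      proof (intro exI[of _ "\<lambda>w'. (w', q (phi w'))"] homeomorphismI)
        show "continuous_on (P u) fst" by (intro continuous_intros)
        show "continuous_on U' (\<lambda>w'. (w', q (phi w')))"
          using cqphi by (auto intro!: continuous_intros simp: o_def)
        show "fst ` P u \<subseteq> U'" by (auto simp: P_def)
        show "(\<lambda>w'. (w', q (phi w'))) ` U' \<subseteq> P u"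
          using qT pq by (auto simp: P_def U'_def)
        show "\<And>x. x \<in> P u \<Longrightarrow> (fst x, q (phi (fst x))) = x"
          by (clarsimp simp: P_def) (metis qp)
        show "\<And>y. y \<in> U' \<Longrightarrow> fst (y, q (phi y)) = y" by simp
      qed
    qed
    ultimately show ?thesis using OU opU' xT w unfolding U'_def
      by (intro exI[of _ U'] conjI exI[of _ "P ` v"]) (auto simp: U'_def)
  qed
  ultimately show ?thesis unfolding E_def[symmetric] by (intro covering_spaceI) auto
qed

lemma lift_holomorphic:
  fixes p :: "complex \<Rightarrow> 'a"
  assumes rs: "riemann_surface X A" and hp: "holo_map D X A p" and cov: "covering_map_onto D p X"
    and oD: "open D" and Om: "open Om" and hpsi: "holo_map Om X A psi"
    and cg: "continuous_on Om g" and gD: "g ` Om \<subseteq> D" and eq: "\<And>w. w \<in> Om \<Longrightarrow> p (g w) = psi w"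
  shows "g holomorphic_on Om"
proof -
  have pD: "p ` D = topspace X" using cov by (simp add: covering_map_onto_def)
  have cp: "continuous_map (top_of_set D) X p" using hp by (simp add: holo_map_def)
  have "g analytic_on Om"
    unfolding analytic_on_def
  proof
    fix w assume w: "w \<in> Om"
    define \<zeta> where "\<zeta> = g w"
    have zD: "\<zeta> \<in> D" using gD w \<zeta>_def by auto
    define x where "x = p \<zeta>"
    have xX: "x \<in> topspace X" using pD zD x_def by auto
    obtain T v where xT: "x \<in> T" and opT: "openin X T" and Uv: "\<Union>v = D \<inter> p -` T"
      and opv: "\<forall>u\<in>v. openin (top_of_set D) u"
      and hm: "\<forall>u\<in>v. homeomorphic_map (top_of_set u) (subtopology X T) p"
      using cov xX unfolding covering_map_onto_def by metis
    obtain u where u: "u \<in> v" "\<zeta> \<in> u" using Uv zD xT x_def by blast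
    have ou: "open u" using opv u oD openin_open_trans by blast
    have injp: "inj_on p u" using hm u homeomorphic_imp_injective_map by fastforce
    have "x \<in> (\<Union>c\<in>A. fst c)" using rs xX by (simp add: riemann_surface_def)
    then obtain d where d: "d \<in> A" "x \<in> fst d" by blast
    have chd: "is_chart X d" using rs d by (auto simp: riemann_surface_def)
    have opd: "openin X (fst d)" using chd by (simp add: is_chart_def)
    have injd: "inj_on (snd d) (fst d)"
    proof -
      have "homeomorphic_map (subtopology X (fst d)) (top_of_set (snd d ` fst d)) (snd d)"
        using chd by (simp add: is_chart_def)
      then have "inj_on (snd d) (topspace (subtopology X (fst d)))"
        by (rule homeomorphic_imp_injective_map)
      moreover have "topspace (subtopology X (fst d)) = fst d" using opd openin_subset by auto
      ultimately show ?thesis by simp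
    qed
    define O1 where "O1 = u \<inter> (D \<inter> p -` fst d)"
    have oO1: "open O1"
    proof -
      have "openin (top_of_set D) {y \<in> topspace (top_of_set D). p y \<in> fst d}"
        using openin_continuous_map_preimage[OF cp opd] .
      then have "open {y \<in> D. p y \<in> fst d}" using oD openin_open_trans by force
      moreover have "{y \<in> D. p y \<in> fst d} = D \<inter> p -` fst d" by auto
      ultimately show ?thesis using ou by (simp add: O1_def open_Int)
    qed
    define phi where "phi = snd d \<circ> p"
    have hphi0: "(snd d \<circ> p) holomorphic_on (D \<inter> p -` fst d)"
      using hp d by (simp add: holo_map_def)
    have hphi: "phi holomorphic_on O1"
      unfolding phi_def by (rule holomorphic_on_subset[OF hphi0]) (auto simp: O1_def)
    have injphi: "inj_on phi O1"
      using injp injd unfolding phi_def O1_def inj_on_def by auto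
    obtain k where hk: "k holomorphic_on (phi ` O1)" and kphi: "\<And>y. y \<in> O1 \<Longrightarrow> k (phi y) = y"
      using holomorphic_has_inverse[OF hphi oO1 injphi] by metis
    define O2 where "O2 = Om \<inter> g -` O1"
    have "open (g -` O1 \<inter> Om)" using cg Om oO1 continuous_on_open_vimage by blast
    moreover have "g -` O1 \<inter> Om = O2" by (auto simp: O2_def)
    ultimately have oO2: "open O2" by simp
    have "g w \<in> O1" unfolding O1_def using u(2) zD d(2) unfolding x_def \<zeta>_def by simp
    then have wO2: "w \<in> O2" using w by (simp add: O2_def)
    have h2: "(k \<circ> (snd d \<circ> psi)) holomorphic_on O2"
    proof (rule holomorphic_on_compose_gen)
      show "(snd d \<circ> psi) holomorphic_on O2"
      proof (rule holomorphic_on_subset)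
        show "(snd d \<circ> psi) holomorphic_on (Om \<inter> psi -` fst d)"
          using hpsi d by (simp add: holo_map_def)
        show "O2 \<subseteq> Om \<inter> psi -` fst d" using eq by (auto simp: O2_def O1_def)
      qed
      show "(snd d \<circ> psi) ` O2 \<subseteq> phi ` O1"
      proof
        fix y assume "y \<in> (snd d \<circ> psi) ` O2"
        then obtain t where t: "t \<in> O2" "y = snd d (psi t)" by auto
        then have "y = phi (g t)" using eq by (simp add: phi_def O2_def)
        then show "y \<in> phi ` O1" using t by (auto simp: O2_def)
      qed
    qed (rule hk)
    have "g holomorphic_on O2"
    proof (rule holomorphic_transform[OF h2])
      fix t assume t: "t \<in> O2"
      then have "(k \<circ> (snd d \<circ> psi)) t = k (phi (g t))" using eq by (simp add: phi_def O2_def)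
      also have "\<dots> = g t" using kphi t by (simp add: O2_def)
      finally show "(k \<circ> (snd d \<circ> psi)) t = g t" .
    qed
    then obtain e where "e > 0" "ball w e \<subseteq> O2" using oO2 wO2 open_contains_ball by blast
    then show "\<exists>e. 0 < e \<and> g holomorphic_on ball w e"
      using \<open>g holomorphic_on O2\<close> holomorphic_on_subset by blast
  qed
  then show ?thesis by (rule analytic_imp_holomorphic)
qed

lemma lip_est:
  assumes hol: "g holomorphic_on ball c R" and bd: "\<And>y. y \<in> ball c R \<Longrightarrow> norm (g y) \<le> 1"
    and R: "R > 0" and x: "x \<in> ball c (R/2)" and y: "y \<in> ball c (R/2)"
  shows "norm (g x - g y) \<le> (4/R) * norm (x - y)"
proof (rule field_differentiable_bound[OF convex_ball])
  fix z assume z: "z \<in> ball c (R/2)"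
  show "(g has_field_derivative deriv g z) (at z within ball c (R/2))"
    using holomorphic_derivI[OF hol open_ball] z R by auto
  have sub: "cball z (R/4) \<subseteq> ball c R"
  proof
    fix t assume "t \<in> cball z (R/4)"
    then have "dist z t \<le> R/4" by simp
    moreover have "dist c z < R/2" using z by simp
    ultimately have "dist c t < R" using dist_triangle[of c t z] R by linarith
    then show "t \<in> ball c R" by simp
  qed
  have "norm ((deriv ^^ 1) g z) \<le> (fact 1) * 1 / (R/4)^1"
  proof (rule Cauchy_inequality)
    show "g holomorphic_on ball z (R/4)" using hol sub holomorphic_on_subset ball_subset_cball by blast
    show "continuous_on (cball z (R/4)) g"
      using holomorphic_on_imp_continuous_on[OF hol] sub continuous_on_subset by blast
    show "0 < R/4" using R by simp
    show "\<And>t. norm (z - t) = R/4 \<Longrightarrow> norm (g t) \<le> 1"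
      using sub bd by (auto simp: dist_norm)
  qed
  then show "norm (deriv g z) \<le> 4/R" by simp
qed (use x y in auto)


lemma construct:
  fixes p fj :: "complex \<Rightarrow> 'a"
  assumes rs: "riemann_surface X A" and hp: "holo_map (ball 0 1) X A p"
    and cov: "covering_map_onto (ball 0 1) p X"
    and hf: "holo_map (ball 0 1 - {0}) X A fj"
    and zj: "zj \<in> ball 0 1 - {0}" and zh: "norm zj < 1/2"
    and u0: "ball \<zeta>0 e0 \<subseteq> ball 0 1" "inj_on p (ball \<zeta>0 e0)"
    and aj: "dist aj \<zeta>0 < e0/2" "p aj = fj zj"
    and R: "- ln (norm zj) > 2*pi" "8*pi / (- ln (norm zj)) < e0/2"
  shows "\<exists>H. H holomorphic_on ball 0 1 \<and> (\<forall>w\<in>ball 0 1 - {0}. H w \<in> ball 0 1 \<and> p (H w) = fj w)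
            \<and> dist (H 0) aj \<le> 4 * norm zj"
proof -
  define D where "D = ball (0::complex) 1"
  define HP where "HP = {w::complex. Re w < 0}"
  have oHP: "open HP" using open_halfspace_Re_lt by (simp add: HP_def)
  have inHP: "w \<in> HP \<longleftrightarrow> norm (exp w) < 1" for w by (simp add: HP_def norm_exp_eq_Re)
  have inHP': "w \<in> HP" if "norm (exp w) < 1" for w using that inHP by blast
  have expHP: "exp w \<in> ball 0 1 - {0}" if "w \<in> HP" for w
    using that inHP by simp
  have hpsi: "holo_map HP X A (fj \<circ> exp)"
    by (rule holo_map_compose[OF hf]) (use expHP in \<open>auto intro: holomorphic_intros\<close>)
  have cpsi: "continuous_map (top_of_set HP) X (fj \<circ> exp)" using hpsi by (simp add: holo_map_def)
  define E where "E = {(w,y). w \<in> HP \<and> y \<in> D \<and> p y = (fj \<circ> exp) w}"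
  have covE: "covering_space E fst HP"
    unfolding E_def D_def by (rule pullback_covering[OF cov cpsi])
  define wj where "wj = Ln zj"
  have zj0: "zj \<noteq> 0" "norm zj < 1" using zj by auto
  have expwj: "exp wj = zj" using zj0 by (simp add: wj_def)
  have wjHP: "wj \<in> HP" by (rule inHP') (simp add: expwj zj0)
  have e0: "e0 > 0" using aj(1) zero_le_dist[of aj \<zeta>0] by linarith
  have aje: "aj \<in> ball \<zeta>0 e0" using aj(1) e0 by (simp add: dist_commute)
  have ajD: "aj \<in> D" using aje u0 by (auto simp: D_def)
  have ajE: "(wj, aj) \<in> E" using wjHP ajD aj(2) expwj by (simp add: E_def)
  have sc: "simply_connected HP" unfolding HP_def by (rule convex_imp_simply_connected[OF convex_halfspace_Re_lt])
  have lpc: "locally path_connected HP"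
    by (rule locally_open_subset[OF locally_path_connected_UNIV]) (simp add: oHP)
  have "\<exists>G. continuous_on HP G \<and> G \<in> HP \<rightarrow> E \<and> G wj = (wj, aj) \<and> (\<forall>y\<in>HP. fst (G y) = id y)"
    by (rule covering_space_lift_strong[OF covE ajE wjHP sc lpc continuous_on_id]) auto
  then obtain G where cG: "continuous_on HP G" and GE: "G \<in> HP \<rightarrow> E" and Gwj: "G wj = (wj, aj)"
     and fG: "\<And>y. y \<in> HP \<Longrightarrow> fst (G y) = y" by auto
  define g where "g = (\<lambda>y. snd (G y))"
  have gprop: "g y \<in> D \<and> p (g y) = fj (exp y)" if "y \<in> HP" for y
  proof -
    have "G y \<in> E" using GE that by auto
    moreover have "fst (G y) = y" using fG that by simp
    ultimately show ?thesis by (cases "G y") (auto simp: E_def g_def)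
  qed
  have gwj: "g wj = aj" using Gwj by (simp add: g_def)
  have cg: "continuous_on HP g" unfolding g_def using cG by (intro continuous_intros)
  have hg: "g holomorphic_on HP"
    by (rule lift_holomorphic[OF rs hp cov open_ball oHP hpsi cg]) (use gprop in \<open>auto simp: D_def\<close>)
  define R where "R = - ln (norm zj)"
  define c where "c = wj + pi * \<i>"
  have Rew: "Re wj = - R" using zj0 by (simp add: R_def wj_def)
  have ballc: "ball c R \<subseteq> HP"
  proof
    fix t assume "t \<in> ball c R"
    then have "norm (t - c) < R" by (simp add: dist_norm norm_minus_commute)
    moreover have "Re (t - c) \<le> norm (t - c)" using complex_Re_le_cmod by blast
    moreover have "Re c = - R" using Rew by (simp add: c_def)
    ultimately show "t \<in> HP" by (simp add: HP_def)
  qed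
  have hgc: "g holomorphic_on ball c R" using hg ballc holomorphic_on_subset by blast
  have bdg: "\<And>y. y \<in> ball c R \<Longrightarrow> norm (g y) \<le> 1"
    using gprop ballc by (force simp: D_def)
  have Rpos: "R > 2*pi" using R(1) by (simp add: R_def)
  have R0: "0 < R" using Rpos pi_gt_zero by linarith
  have w1: "wj \<in> ball c (R/2)" using Rpos by (simp add: c_def dist_norm norm_mult)
  have w2: "wj + 2*pi*\<i> \<in> ball c (R/2)" using Rpos
    by (simp add: c_def dist_norm) (simp add: algebra_simps norm_mult)
  have "norm (g (wj + 2*pi*\<i>) - g wj) \<le> (4/R) * norm ((wj + 2*pi*\<i>) - wj)"
    using lip_est[OF hgc bdg R0 w2 w1] .
  also have "\<dots> = 8*pi/R" by (simp add: norm_mult)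
  finally have est: "dist (g (wj + 2*pi*\<i>)) aj < e0/2" using R(2) gwj by (simp add: dist_norm R_def)
  have "dist \<zeta>0 (g (wj + 2*pi*\<i>)) < e0"
    using est aj(1) dist_triangle[of "g (wj + 2*pi*\<i>)" \<zeta>0 aj] by (simp add: dist_commute)
  then have g2b: "g (wj + 2*pi*\<i>) \<in> ball \<zeta>0 e0" by simp
  have wj2: "wj + 2*pi*\<i> \<in> HP" using wjHP by (simp add: HP_def)
  have "exp (wj + 2*pi*\<i>) = exp wj" using exp_plus_2pin[of wj 1] by (simp add: algebra_simps)
  then have "p (g (wj + 2*pi*\<i>)) = p aj" using gprop[OF wj2] aj(2) expwj by simp
  then have g2aj: "g (wj + 2*pi*\<i>) = aj" using u0(2) g2b aje by (meson inj_onD)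
  have per: "g (y + 2*pi*\<i>) = g y" if y: "y \<in> HP" for y
  proof -
    define G2 where "G2 = (\<lambda>y. (y, g (y + 2*pi*\<i>)))"
    have y2: "y + 2*pi*\<i> \<in> HP" if "y \<in> HP" for y using that by (simp add: HP_def)
    have ex2: "exp (y + 2*pi*\<i>) = exp y" for y using exp_plus_2pin[of y 1] by (simp add: algebra_simps)
    have "G y = G2 y"
    proof (rule covering_space_lift_unique[OF covE, of G wj G2 HP id])
      show "G wj = G2 wj" using Gwj g2aj by (simp add: G2_def)
      show "continuous_on HP id" by simp
      show "id \<in> HP \<rightarrow> HP" by simp
      show "continuous_on HP G" by (rule cG)
      show "G \<in> HP \<rightarrow> E" by (rule GE)
      show "\<And>x. x \<in> HP \<Longrightarrow> id x = fst (G x)" using fG by simp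
      show "continuous_on HP G2" unfolding G2_def
        by (intro continuous_intros continuous_on_compose2[OF cg]) (auto simp: HP_def)
      show "G2 \<in> HP \<rightarrow> E" using gprop y2 ex2 by (auto simp: G2_def E_def)
      show "\<And>x. x \<in> HP \<Longrightarrow> id x = fst (G2 x)" by (simp add: G2_def)
      show "connected HP" using sc simply_connected_imp_connected by blast
    qed (use wjHP y in auto)
    then show ?thesis by (simp add: G2_def g_def)
  qed
  have pern: "g (y + of_nat n * (2*pi*\<i>)) = g y" if "y \<in> HP" for y n
  proof (induction n)
    case (Suc n)
    have "y + of_nat n * (2*pi*\<i>) \<in> HP" using that by (simp add: HP_def)
    then have "g (y + of_nat n * (2*pi*\<i>) + 2*pi*\<i>) = g (y + of_nat n * (2*pi*\<i>))" by (rule per)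
    then show ?case using Suc by (simp add: algebra_simps)
  qed simp
  have perint: "g (y + of_int n * (2*pi*\<i>)) = g y" if y: "y \<in> HP" for y and n :: int
  proof (cases "n \<ge> 0")
    case True
    then have "of_int n = (of_nat (nat n) :: complex)" by simp
    then show ?thesis using pern[OF y, of "nat n"] by simp
  next
    case False
    define m where "m = nat (- n)"
    have nm: "(of_int n :: complex) = - of_nat m" using False by (simp add: m_def)
    have y': "y + of_int n * (2*pi*\<i>) \<in> HP" using y by (simp add: HP_def)
    have "g (y + of_int n * (2*pi*\<i>) + of_nat m * (2*pi*\<i>)) = g (y + of_int n * (2*pi*\<i>))"
      by (rule pern[OF y'])
    then show ?thesis by (simp add: nm)
  qed
  have glog: "g w = g (Ln z)" if w: "w \<in> HP" and ez: "exp w = z" for w z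
  proof -
    have z0: "z \<noteq> 0" using ez by auto
    have "exp w = exp (Ln z)" using ez z0 by simp
    then obtain n :: int where n: "w = Ln z + of_int (2 * n) * pi * \<i>" using exp_eq by blast
    have lz: "Ln z \<in> HP" using expHP[OF w] ez z0 by (intro inHP') simp
    have "w = Ln z + of_int n * (2*pi*\<i>)" using n by simp
    then show ?thesis using perint[OF lz] by simp
  qed
  define h where "h = (\<lambda>z. g (Ln z))"
  have hprop: "h z \<in> D \<and> p (h z) = fj z" if "z \<in> D - {0}" for z
  proof -
    have "Ln z \<in> HP" using that by (intro inHP') (simp add: D_def)
    then show ?thesis using gprop that by (simp add: h_def)
  qed
  have ch: "continuous_on (D - {0}) h"
    unfolding continuous_on_eq_continuous_within
  proof
    fix z' assume z': "z' \<in> D - {0}"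
    define L where "L = (\<lambda>y. Ln (y / z') + Ln z')"
    have "isCont (\<lambda>y. Ln (y / z')) z'"
      using z' by (intro isCont_Ln') (auto intro: continuous_intros)
    then have iL: "isCont L z'" unfolding L_def by (rule continuous_add[OF _ continuous_const])
    have Lz: "L z' = Ln z'" using z' by (simp add: L_def)
    have lzHP: "Ln z' \<in> HP" using z' by (intro inHP') (simp add: D_def)
    have "isCont g (L z')"
      using cg oHP lzHP Lz continuous_on_eq_continuous_at by fastforce
    then have "continuous (at z' within D - {0}) (\<lambda>y. g (L y))"
      by (rule continuous_within_compose3) (rule continuous_at_imp_continuous_at_within[OF iL])
    then show "continuous (at z' within D - {0}) h"
    proof (rule continuous_transform_within[of _ _ _ 1])
      fix y assume y: "y \<in> D - {0}"
      have eL: "exp (L y) = y" using y z' by (simp add: L_def exp_add)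
      then have "L y \<in> HP" using y by (intro inHP') (simp add: D_def)
      then show "g (L y) = h y" using glog eL by (simp add: h_def)
    qed (use z' in auto)
  qed
  have hh: "h holomorphic_on (D - {0})"
    unfolding D_def by (rule lift_holomorphic[OF rs hp cov open_ball _ hf]) (use ch hprop in \<open>auto simp: D_def; metis\<close>)+
  have ev: "eventually (\<lambda>z. norm (h z) \<le> 1) (at 0)"
    unfolding eventually_at
    by (rule exI[of _ 1]) (use hprop in \<open>force simp: D_def dist_norm\<close>)
  have "\<exists>H. H holomorphic_on D \<and> (\<forall>z \<in> D - {0}. H z = h z)"
    using holomorphic_on_extend_bounded[OF hh] ev by (auto simp: D_def)
  then obtain H where hH: "H holomorphic_on D" and Hh: "\<And>z. z \<in> D - {0} \<Longrightarrow> H z = h z" by blast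
  have ev2: "eventually (\<lambda>z. norm (H z) \<le> 1) (at 0)"
    unfolding eventually_at
    by (rule exI[of _ 1]) (use hprop Hh in \<open>force simp: D_def dist_norm\<close>)
  have "isCont H 0"
    using hH by (metis D_def centre_in_ball continuous_on_eq_continuous_at holomorphic_on_imp_continuous_on open_ball zero_less_one)
  then have "(H \<longlongrightarrow> H 0) (at 0)" by (simp add: isCont_def)
  then have H01: "norm (H 0) \<le> 1" using Lim_norm_ubound[OF _ _ ev2] by simp
  have bdH: "\<And>y. y \<in> ball 0 1 \<Longrightarrow> norm (H y) \<le> 1"
  proof -
    fix y :: complex assume y: "y \<in> ball 0 1"
    show "norm (H y) \<le> 1"
    proof (cases "y = 0")
      case False
      then show ?thesis using y Hh hprop by (force simp: D_def)
    qed (use H01 in simp)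
  qed
  have zj2: "zj \<in> ball 0 (1/2)" using zh by simp
  have "norm (H 0 - H zj) \<le> (4/1) * norm (0 - zj)"
    by (rule lip_est[OF hH[unfolded D_def] bdH]) (use zj2 in auto)
  moreover have "H zj = aj" using Hh[of zj] zj gwj by (simp add: D_def h_def wj_def)
  ultimately have "dist (H 0) aj \<le> 4 * norm zj" by (simp add: dist_norm)
  moreover have "\<forall>w\<in>ball 0 1 - {0}. H w \<in> ball 0 1 \<and> p (H w) = fj w"
    using Hh hprop by (simp add: D_def)
  ultimately show ?thesis using hH by (auto simp: D_def)
qed


theorem mainTheorem3:
  fixes X :: "'a topology" and A :: "('a set \<times> ('a \<Rightarrow> complex)) set"
    and Xs :: "nat \<Rightarrow> 'a set" and f :: "nat \<Rightarrow> complex \<Rightarrow> 'a"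
    and z :: "nat \<Rightarrow> complex" and z0 :: 'a
  assumes hyp: "hyperbolic_rs X A"
    and open_Xs: "\<And>j. openin X (Xs j)"
    and mono_Xs: "\<And>j. Xs j \<subseteq> Xs (Suc j)"
    and union_Xs: "(\<Union>j. Xs j) = topspace X"
    and holo_f: "\<And>j. holo_map (ball 0 1 - {0}) X A (f j)"
    and f_into: "\<And>j. f j ` (ball 0 1 - {0}) \<subseteq> Xs j"
    and z_in: "\<And>j. z j \<in> ball 0 1 - {0}"
    and z_lim: "z \<longlonglongrightarrow> 0"
    and z0_in: "z0 \<in> topspace X"
    and f_lim: "limitin X (\<lambda>j. f j (z j)) z0 sequentially"
  shows "\<exists>N Fs. (\<forall>j\<ge>N. holo_map (ball 0 1) X A (Fs j) \<and> Fs j ` ball 0 1 \<subseteq> Xs j \<and>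
                   (\<forall>w\<in>ball 0 1 - {0}. Fs j w = f j w))
            \<and> (\<exists>r F. strict_mono r \<and> (\<forall>k. N \<le> r k) \<and> holo_map (ball 0 1) X A F \<and>
                   conv_on_compacts (ball 0 1) X (\<lambda>k. Fs (r k)) F)"
proof -
  define D where "D = ball (0::complex) 1"
  obtain p where rs: "riemann_surface X A" and hp: "holo_map D X A p" and cov: "covering_map_onto D p X"
    using hyp by (auto simp: hyperbolic_rs_def D_def)
  have pD: "p ` D = topspace X" using cov by (simp add: covering_map_onto_def)
  have cp: "continuous_map (top_of_set D) X p" using hp by (simp add: holo_map_def)
  have openpre: "open (D \<inter> p -` W)" if "openin X W" for W
  proof -
    have "openin (top_of_set D) {y \<in> topspace (top_of_set D). p y \<in> W}"
      using openin_continuous_map_preimage[OF cp that] .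
    then have "open {y \<in> D. p y \<in> W}" using openin_open_trans open_ball D_def by force
    moreover have "{y \<in> D. p y \<in> W} = D \<inter> p -` W" by auto
    ultimately show ?thesis by simp
  qed
  obtain T0 v0 where xT: "z0 \<in> T0" and opT: "openin X T0" and Uv: "\<Union>v0 = D \<inter> p -` T0"
      and opv: "\<forall>u\<in>v0. openin (top_of_set D) u"
      and hm: "\<forall>u\<in>v0. homeomorphic_map (top_of_set u) (subtopology X T0) p"
      using cov z0_in unfolding covering_map_onto_def by metis
  obtain \<zeta>0 where z0D: "\<zeta>0 \<in> D" "p \<zeta>0 = z0" using pD z0_in by (metis imageE)
  obtain u0 where u0: "u0 \<in> v0" "\<zeta>0 \<in> u0" using Uv z0D xT by blast
  have ou0: "open u0" using opv u0 openin_open_trans open_ball D_def by blast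
  have u0D: "u0 \<subseteq> D" using Uv u0 by blast
  obtain q0 where q: "homeomorphic_maps (top_of_set u0) (subtopology X T0) p q0"
    using hm u0 homeomorphic_map_maps by blast
  have TX: "T0 \<subseteq> topspace X" using opT openin_subset by blast
  have tsT: "topspace (subtopology X T0) = T0" using TX by auto
  have cq: "continuous_map (subtopology X T0) (top_of_set u0) q0" and qp: "\<And>y. y \<in> u0 \<Longrightarrow> q0 (p y) = y"
    and pq: "\<And>x. x \<in> T0 \<Longrightarrow> p (q0 x) = x"
    using q tsT by (auto simp: homeomorphic_maps_def)
  have injp: "inj_on p u0" using qp by (rule inj_on_inverseI)
  obtain k0 where k0: "z0 \<in> Xs k0" using union_Xs z0_in by blast
  define O3 where "O3 = D \<inter> p -` Xs k0"
  have oO3: "open O3" using openpre open_Xs by (simp add: O3_def)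
  have zO3: "\<zeta>0 \<in> O3" using z0D k0 by (simp add: O3_def)
  obtain e0 where e0: "e0 > 0" "ball \<zeta>0 e0 \<subseteq> u0" using ou0 u0 open_contains_ball by blast
  obtain e1 where e1: "e1 > 0" "ball \<zeta>0 e1 \<subseteq> O3" using oO3 zO3 open_contains_ball by blast
  define a where "a j = q0 (f j (z j))" for j
  have evT: "eventually (\<lambda>j. f j (z j) \<in> T0) sequentially" using f_lim opT xT by (simp add: limitin_def)
  have alim: "a \<longlonglongrightarrow> \<zeta>0"
  proof -
    have "limitin (subtopology X T0) (\<lambda>j. f j (z j)) z0 sequentially"
      using f_lim evT xT by (simp add: limitin_subtopology)
    then have "limitin (top_of_set u0) (q0 \<circ> (\<lambda>j. f j (z j))) (q0 z0) sequentially"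
      by (rule continuous_map_limit[OF cq])
    then have "limitin euclidean (q0 \<circ> (\<lambda>j. f j (z j))) (q0 z0) sequentially"
      by (simp add: limitin_subtopology)
    moreover have "q0 z0 = \<zeta>0" using qp u0 z0D by metis
    moreover have "a = (\<lambda>j. q0 (f j (z j)))" by (simp add: a_def fun_eq_iff)
    ultimately show ?thesis by (simp add: o_def)
  qed
  define M where "M = max (2*pi + 1) (16*pi/e0 + 1)"
  define \<delta> where "\<delta> = min (exp (- M)) (min (1/2) (e1/8))"
  have \<delta>pos: "\<delta> > 0" using e1 by (simp add: \<delta>_def)
  have ev1: "eventually (\<lambda>j. norm (z j) < \<delta>) sequentially"
    using z_lim \<delta>pos unfolding tendsto_iff by (simp add: dist_norm)
  have "min e0 e1 / 2 > 0" using e0 e1 by simp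
  then have ev2: "eventually (\<lambda>j. dist (a j) \<zeta>0 < min e0 e1 / 2) sequentially"
    using alim unfolding tendsto_iff by blast
  have ev3: "eventually (\<lambda>j. k0 \<le> j) sequentially" by (rule eventually_ge_at_top)
  define Good where "Good j \<longleftrightarrow> f j (z j) \<in> T0 \<and> norm (z j) < \<delta> \<and> dist (a j) \<zeta>0 < min e0 e1 / 2 \<and> k0 \<le> j" for j
  have "eventually (\<lambda>j. Good j) sequentially"
    by (rule eventually_mono[OF eventually_conj[OF evT eventually_conj[OF ev1 eventually_conj[OF ev2 ev3]]]])
       (simp add: Good_def)
  then obtain N where N: "\<And>j. j \<ge> N \<Longrightarrow> Good j" by (auto simp: eventually_sequentially)
  have exH: "\<exists>H. H holomorphic_on D \<and> (\<forall>w\<in>D - {0}. H w \<in> D \<and> p (H w) = f j w)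
              \<and> dist (H 0) (a j) \<le> 4 * norm (z j)" if gj: "Good j" for j
  proof -
    have zjn: "norm (z j) < \<delta>" "f j (z j) \<in> T0" "dist (a j) \<zeta>0 < min e0 e1 / 2"
      using gj by (auto simp: Good_def)
    have zpos: "norm (z j) > 0" using z_in[of j] by simp
    have "ln (norm (z j)) < ln (exp (- M))"
      using zjn(1) zpos by (subst ln_less_cancel_iff) (auto simp: \<delta>_def)
    then have RM: "- ln (norm (z j)) > M" by simp
    have R1: "- ln (norm (z j)) > 2*pi" using RM by (simp add: M_def)
    have R2': "- ln (norm (z j)) > 16*pi/e0" using RM by (simp add: M_def)
    have R2: "8*pi / (- ln (norm (z j))) < e0/2"
    proof -
      define r where "r = - ln (norm (z j))"
      have rpos: "r > 0" using R1 pi_gt_zero unfolding r_def by linarith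
      have "16*pi < e0 * r" using R2' e0 by (simp add: r_def field_simps)
      then show ?thesis using rpos e0 by (simp add: r_def[symmetric] field_simps)
    qed
    show ?thesis
    proof (rule construct[OF rs hp[unfolded D_def] cov[unfolded D_def] holo_f z_in, of j \<zeta>0 e0 "a j",
          folded D_def])
      show "norm (z j) < 1/2" using zjn(1) by (simp add: \<delta>_def)
      show "ball \<zeta>0 e0 \<subseteq> D" using e0 u0D by blast
      show "inj_on p (ball \<zeta>0 e0)" using injp e0 inj_on_subset by blast
      show "dist (a j) \<zeta>0 < e0/2" using zjn(3) by simp
      show "p (a j) = f j (z j)" using pq zjn(2) by (simp add: a_def)
    qed (use R1 R2 in auto)
  qed
  have "\<forall>j. \<exists>H. Good j \<longrightarrow> (H holomorphic_on D \<and> (\<forall>w\<in>D - {0}. H w \<in> D \<and> p (H w) = f j w)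
              \<and> dist (H 0) (a j) \<le> 4 * norm (z j))"
    using exH by blast
  then obtain HH where HH: "\<And>j. Good j \<Longrightarrow> HH j holomorphic_on D \<and> (\<forall>w\<in>D - {0}. HH j w \<in> D \<and> p (HH j w) = f j w)
              \<and> dist (HH j 0) (a j) \<le> 4 * norm (z j)"
    by metis
  have Xmono: "Xs k0 \<subseteq> Xs j" if "k0 \<le> j" for j
    using lift_Suc_mono_le[of Xs, OF mono_Xs that] .
  have HH0: "HH j 0 \<in> ball \<zeta>0 e1" if "j \<ge> N" for j
  proof -
    have g: "Good j" using N that by blast
    have "dist (HH j 0) (a j) \<le> 4 * norm (z j)" using HH[OF g] by blast
    moreover have "norm (z j) < e1/8" using g by (simp add: Good_def \<delta>_def)
    moreover have "dist (a j) \<zeta>0 < e1/2" using g by (simp add: Good_def)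
    ultimately have "dist (HH j 0) \<zeta>0 < e1"
      using dist_triangle[of "HH j 0" \<zeta>0 "a j"] by linarith
    then show ?thesis by (simp add: dist_commute)
  qed
  have HHhol: "HH j holomorphic_on D" if "j \<ge> N" for j using HH N that by blast
  have HHim: "HH j ` D \<subseteq> D" if "j \<ge> N" for j
  proof
    fix y assume "y \<in> HH j ` D"
    then obtain w where w: "w \<in> D" "y = HH j w" by blast
    show "y \<in> D"
    proof (cases "w = 0")
      case True
      then show ?thesis using HH0[OF that] e1 w by (auto simp: O3_def)
    next
      case False
      then show ?thesis using HH[OF N[OF that]] w by blast
    qed
  qed
  define Fs where "Fs j = p \<circ> HH j" for j
  have part1: "\<forall>j\<ge>N. holo_map (ball 0 1) X A (Fs j) \<and> Fs j ` ball 0 1 \<subseteq> Xs j \<and>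
                   (\<forall>w\<in>ball 0 1 - {0}. Fs j w = f j w)"
  proof (intro allI impI conjI)
    fix j assume j: "N \<le> j"
    show "holo_map (ball 0 1) X A (Fs j)"
      unfolding Fs_def D_def[symmetric] using holo_map_compose[OF hp HHhol[OF j] HHim[OF j]] .
    show eqf: "\<forall>w\<in>ball 0 1 - {0}. Fs j w = f j w" using HH[OF N[OF j]] by (simp add: Fs_def D_def)
    show "Fs j ` ball 0 1 \<subseteq> Xs j"
    proof
      fix y assume "y \<in> Fs j ` ball 0 1"
      then obtain w where w: "w \<in> ball 0 1" "y = Fs j w" by blast
      show "y \<in> Xs j"
      proof (cases "w = 0")
        case True
        have "HH j 0 \<in> O3" using HH0[OF j] e1 by blast
        then have "p (HH j 0) \<in> Xs k0" by (simp add: O3_def)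
        moreover have "k0 \<le> j" using N[OF j] by (simp add: Good_def)
        ultimately show ?thesis using Xmono True w by (auto simp: Fs_def)
      next
        case False
        then have "w \<in> ball 0 1 - {0}" using w by simp
        then show ?thesis using eqf w f_into[of j] by auto
      qed
    qed
  qed
  have Hlim0: "(\<lambda>j. HH j 0) \<longlonglongrightarrow> \<zeta>0"
  proof -
    have up: "(\<lambda>j. 4 * norm (z j) + dist (a j) \<zeta>0) \<longlonglongrightarrow> 0"
    proof -
      have "(\<lambda>j. norm (z j)) \<longlonglongrightarrow> 0" using tendsto_norm_zero[OF z_lim] .
      moreover have "(\<lambda>j. dist (a j) \<zeta>0) \<longlonglongrightarrow> 0" using alim tendsto_dist_iff by blast
      ultimately show ?thesis using tendsto_add[OF tendsto_mult_right_zero] by fastforce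
    qed
    have evd: "eventually (\<lambda>j. dist (HH j 0) \<zeta>0 \<le> 4 * norm (z j) + dist (a j) \<zeta>0) sequentially"
      unfolding eventually_sequentially
    proof (intro exI[of _ N] allI impI)
      fix j assume j: "N \<le> j"
      have "dist (HH j 0) (a j) \<le> 4 * norm (z j)" using HH[OF N[OF j]] by blast
      then show "dist (HH j 0) \<zeta>0 \<le> 4 * norm (z j) + dist (a j) \<zeta>0"
        using dist_triangle[of "HH j 0" \<zeta>0 "a j"] by linarith
    qed
    have "(\<lambda>j. dist (HH j 0) \<zeta>0) \<longlonglongrightarrow> 0"
      by (rule real_tendsto_sandwich[OF _ evd tendsto_const up]) simp
    then show ?thesis using tendsto_dist_iff by blast
  qed
  define FF where "FF k = HH (N + k)" for k
  obtain hl r' where hl: "hl holomorphic_on D" and r': "strict_mono (r' :: nat \<Rightarrow> nat)"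
      and pw: "\<And>x. x \<in> D \<Longrightarrow> ((\<lambda>n. FF (r' n) x) \<longlongrightarrow> hl x) sequentially"
      and un: "\<And>K. \<lbrakk>compact K; K \<subseteq> D\<rbrakk> \<Longrightarrow> uniform_limit K (FF \<circ> r') hl sequentially"
  proof (rule Montel[of D "{h. h holomorphic_on D \<and> (\<forall>x\<in>D. norm (h x) \<le> 1)}" FF])
    show "open D" by (simp add: D_def)
    show "\<And>h. h \<in> {h. h holomorphic_on D \<and> (\<forall>x\<in>D. norm (h x) \<le> 1)} \<Longrightarrow> h holomorphic_on D" by blast
    show "\<And>K. \<lbrakk>compact K; K \<subseteq> D\<rbrakk> \<Longrightarrow> \<exists>B. \<forall>h \<in> {h. h holomorphic_on D \<and> (\<forall>x\<in>D. norm (h x) \<le> 1)}. \<forall> z \<in> K. norm(h z) \<le> B"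
      by blast
    show "range FF \<subseteq> {h. h holomorphic_on D \<and> (\<forall>x\<in>D. norm (h x) \<le> 1)}"
    proof clarify
      fix k
      have j: "N \<le> N + k" by simp
      show "FF k holomorphic_on D \<and> (\<forall>x\<in>D. norm (FF k x) \<le> 1)"
        using HHhol[OF j] HHim[OF j] by (force simp: FF_def D_def)
    qed
  qed (rule that)
  define r where "r k = N + r' k" for k
  have smr: "strict_mono r" using r' by (simp add: strict_mono_def r_def)
  have hl0: "hl 0 = \<zeta>0"
  proof -
    have "((\<lambda>n. FF (r' n) 0) \<longlongrightarrow> hl 0) sequentially" using pw by (simp add: D_def)
    moreover have "((\<lambda>j. HH j 0) \<circ> r) \<longlonglongrightarrow> \<zeta>0" using LIMSEQ_subseq_LIMSEQ[OF Hlim0 smr] .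
    moreover have "((\<lambda>j. HH j 0) \<circ> r) = (\<lambda>n. FF (r' n) 0)" by (auto simp: r_def FF_def)
    ultimately show ?thesis using LIMSEQ_unique by metis
  qed
  have hlb: "norm (hl x) \<le> 1" if x: "x \<in> D" for x
  proof (rule Lim_norm_ubound[OF _ pw[OF x]])
    show "\<not> trivial_limit sequentially" by simp
    show "\<forall>\<^sub>F n in sequentially. norm (FF (r' n) x) \<le> 1"
    proof (intro always_eventually allI)
      fix n
      have j: "N \<le> N + r' n" by simp
      show "norm (FF (r' n) x) \<le> 1" using HHim[OF j] x by (force simp: FF_def D_def)
    qed
  qed
  have hlim: "hl ` D \<subseteq> D"
  proof (cases "hl constant_on D")
    case True
    then obtain y where y: "\<And>x. x \<in> D \<Longrightarrow> hl x = y" by (auto simp: constant_on_def)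
    then have "y = \<zeta>0" using hl0 by (metis D_def centre_in_ball zero_less_one)
    then show ?thesis using y z0D by auto
  next
    case False
    have "open (hl ` D)"
      by (rule open_mapping_thm[OF hl _ _ _ subset_refl False]) (auto simp: D_def)
    moreover have "hl ` D \<subseteq> cball 0 1" using hlb by auto
    ultimately have "hl ` D \<subseteq> interior (cball 0 1)" using interior_maximal by blast
    then show ?thesis by (simp add: D_def)
  qed
  have hF: "holo_map (ball 0 1) X A (p \<circ> hl)"
    unfolding D_def[symmetric] using holo_map_compose[OF hp hl hlim] .
  have conv: "conv_on_compacts (ball 0 1) X (\<lambda>k. Fs (r k)) (p \<circ> hl)"
    unfolding conv_on_compacts_def D_def[symmetric]
  proof (intro allI impI)
    fix K W assume KW: "compact K \<and> K \<subseteq> D \<and> openin X W \<and> (p \<circ> hl) ` K \<subseteq> W"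
    define V where "V = D \<inter> p -` W"
    have oV: "open V" using openpre KW by (simp add: V_def)
    have hKV: "hl ` K \<subseteq> V" using KW hlim by (auto simp: V_def)
    have "continuous_on K hl"
      using holomorphic_on_imp_continuous_on[OF hl] KW continuous_on_subset by blast
    then have chK: "compact (hl ` K)" using KW compact_continuous_image by blast
    obtain \<epsilon> where \<epsilon>: "\<epsilon> > 0" "(\<Union>x\<in>hl ` K. ball x \<epsilon>) \<subseteq> V"
      using compact_subset_open_imp_ball_epsilon_subset[OF chK oV hKV] by blast
    have "\<forall>\<^sub>F n in sequentially. \<forall>x\<in>K. dist ((FF \<circ> r') n x) (hl x) < \<epsilon>"
      using un[of K] KW \<epsilon>(1) unfolding uniform_limit_iff by blast
    then show "\<forall>\<^sub>F k in sequentially. Fs (r k) ` K \<subseteq> W"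
    proof (rule eventually_mono)
      fix n assume n: "\<forall>x\<in>K. dist ((FF \<circ> r') n x) (hl x) < \<epsilon>"
      show "Fs (r n) ` K \<subseteq> W"
      proof
        fix y assume "y \<in> Fs (r n) ` K"
        then obtain x where x: "x \<in> K" "y = Fs (r n) x" by blast
        have "dist (hl x) (HH (r n) x) < \<epsilon>"
          using n x by (simp add: FF_def r_def dist_commute)
        then have "HH (r n) x \<in> ball (hl x) \<epsilon>" by simp
        then have "HH (r n) x \<in> V" using \<epsilon>(2) x by blast
        then show "y \<in> W" using x by (simp add: V_def Fs_def)
      qed
    qed
  qed
  have "\<forall>k. N \<le> r k" by (simp add: r_def)
  then show ?thesis using part1 smr hF conv by blast
qed

end
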